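(* If $\mathbf{A}\in\mathbb{R}^{n_1\times r}$ and $\mathbf{B}\in\mathbb{R}^{n_2\times r}$, then $\mu(\mathbf{A}\odot\mathbf{B})\le\mu(\mathbf{A})\mu(\mathbf{B})r$.
   Context: For an $n\times r$ matrix $\mathbf{M}$, its coherence is $\mu(\mathbf{M})=\frac{n}{r}\max_{i\in[n]}\|\mathrm{proj}_{\mathrm{col}(\mathbf{M})}\mathbf{e}_i\|_2^2$, where $r$ is the number of columns, $\mathrm{col}(\mathbf{M})$ the column space and $\mathbf{e}_i$ the $i$-th standard basis vector. The Khatri–Rao product $\mathbf{A}\odot\mathbf{B}\in\mathbb{R}^{n_1n_2\times r}$ is the matrix whose $\ell$-th column is the Kronecker product $\mathbf{A}_{:,\ell}\otimes\mathbf{B}_{:,\ell}$. *)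

theory Defs
  imports "HOL-Analysis.Analysis"
begin

text \<open>Column space of an n x r matrix (type real^'r^'n: rows indexed by 'n, columns by 'r).\<close>
definition col_space :: "real^'r^'n \<Rightarrow> (real^'n) set" where
  "col_space M = span (columns M)"

definition proj_onto :: "(real^'n) set \<Rightarrow> real^'n \<Rightarrow> real^'n" where
  "proj_onto V x = closest_point V x"

definition coherence :: "real^'r^'n \<Rightarrow> real" where
  "coherence M = (real CARD('n) / real CARD('r)) *
     Max ((\<lambda>i. (norm (proj_onto (col_space M) (axis i 1)))\<^sup>2) ` UNIV)"

text \<open>Khatri-Rao product: column l is the Kronecker product of column l of A and of B;
  rows indexed by pairs (i,j), corresponding to row (i-1) n2 + j.\<close>
definition khatri_rao :: "real^'r^'n1 \<Rightarrow> real^'r^'n2 \<Rightarrow> real^'r^('n1 \<times> 'n2)" where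
  "khatri_rao A B = (\<chi> p l. (A $ fst p $ l) * (B $ snd p $ l))"

end

theory Submission
  imports Defs
begin

lemma proj_facts:
  fixes S :: "(real^'n) set"
  assumes "subspace S"
  shows "proj_onto S a \<in> S" and "\<And>t. t \<in> S \<Longrightarrow> inner (a - proj_onto S a) t = 0"
proof -
  have cl: "closed S" using closed_subspace[OF assms] .
  have cv: "convex S" using subspace_imp_convex[OF assms] .
  have ne: "S \<noteq> {}" using assms subspace_0 by blast
  show pin: "proj_onto S a \<in> S" unfolding proj_onto_def using closest_point_in_set[OF cl ne] .
  fix t assume t: "t \<in> S"
  let ?p = "proj_onto S a"
  have "?p + t \<in> S" using pin t assms subspace_add by blast
  from closest_point_dot[OF cv cl this, of a]
  have 1: "inner (a - ?p) t \<le> 0" unfolding proj_onto_def by simp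
  have "?p - t \<in> S" using pin t assms subspace_diff by blast
  from closest_point_dot[OF cv cl this, of a]
  have 2: "inner (a - ?p) t \<ge> 0" unfolding proj_onto_def by (simp add: inner_diff_right)
  show "inner (a - ?p) t = 0" using 1 2 by linarith
qed

lemma subspace_col: "subspace (col_space M)"
  unfolding col_space_def by (rule subspace_span)

lemma proj_coord:
  fixes M :: "real^'r^'n"
  assumes "x \<in> col_space M"
  shows "x $ i = inner (proj_onto (col_space M) (axis i 1)) x"
proof -
  have "inner (axis i 1 - proj_onto (col_space M) (axis i 1)) x = 0"
    using proj_facts(2)[OF subspace_col assms] .
  then show ?thesis by (simp add: inner_diff_left inner_commute[of "axis i 1"] inner_axis)
qed

lemma col_in: "column l M \<in> col_space M"
  unfolding col_space_def columns_def by (rule span_base) blast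

lemma sum_pairs:
  fixes f :: "'a::finite \<Rightarrow> real" and g :: "'b::finite \<Rightarrow> real"
  shows "(\<Sum>k\<in>UNIV. f (fst k) * g (snd k)) = (\<Sum>p\<in>UNIV. f p) * (\<Sum>q\<in>UNIV. g q)"
proof -
  have "(\<Sum>k\<in>UNIV. f (fst k) * g (snd k)) = (\<Sum>k\<in>UNIV \<times> UNIV. f (fst k) * g (snd k))"
    by (simp add: UNIV_Times_UNIV)
  also have "\<dots> = (\<Sum>p\<in>UNIV. \<Sum>q\<in>UNIV. f p * g q)"
    by (simp add: sum.cartesian_product split_def)
  also have "\<dots> = (\<Sum>p\<in>UNIV. f p) * (\<Sum>q\<in>UNIV. g q)" by (simp add: sum_product)
  finally show ?thesis .
qed

lemma key:
  fixes A :: "real^'r^'n1" and B :: "real^'r^'n2"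
  assumes "s \<in> col_space (khatri_rao A B)"
  shows "s $ (i,j) = inner s (\<chi> p. proj_onto (col_space A) (axis i 1) $ fst p
                                  * proj_onto (col_space B) (axis j 1) $ snd p)"
proof -
  let ?u = "proj_onto (col_space A) (axis i 1)"
  let ?v = "proj_onto (col_space B) (axis j 1)"
  let ?w = "(\<chi> p. ?u $ fst p * ?v $ snd p) :: real^('n1\<times>'n2)"
  have "s \<in> span (columns (khatri_rao A B))" using assms unfolding col_space_def .
  then show ?thesis
  proof (rule span_induct)
    show "subspace {s. s $ (i,j) = inner s ?w}" unfolding subspace_def by (simp add: inner_add_left)
  next
    fix x assume "x \<in> columns (khatri_rao A B)"
    then obtain l where x: "x = column l (khatri_rao A B)" unfolding columns_def by blast
    have "inner x ?w = (\<Sum>k\<in>UNIV. (A $ fst k $ l * ?u $ fst k) * (B $ snd k $ l * ?v $ snd k))"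
      unfolding x inner_vec_def column_def khatri_rao_def by (simp add: mult_ac)
    also have "\<dots> = (\<Sum>p\<in>UNIV. A $ p $ l * ?u $ p) * (\<Sum>q\<in>UNIV. B $ q $ l * ?v $ q)"
      by (rule sum_pairs)
    also have "\<dots> = inner ?u (column l A) * inner ?v (column l B)"
      by (simp add: inner_vec_def column_def mult_ac)
    also have "\<dots> = A $ i $ l * B $ j $ l"
      using proj_coord[OF col_in, of l A i] proj_coord[OF col_in, of l B j]
      by (simp add: column_def)
    finally show "x $ (i,j) = inner x ?w" unfolding x column_def khatri_rao_def by simp
  qed
qed

lemma norm_w:
  fixes u :: "real^'a" and v :: "real^'b"
  shows "norm ((\<chi> p. u $ fst p * v $ snd p) :: real^('a\<times>'b)) = norm u * norm v"
proof -
  have "(norm ((\<chi> p. u $ fst p * v $ snd p) :: real^('a\<times>'b)))\<^sup>2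
      = (\<Sum>k\<in>UNIV. (u $ fst k * u $ fst k) * (v $ snd k * v $ snd k))"
    by (simp add: power2_norm_eq_inner inner_vec_def mult_ac)
  also have "\<dots> = (\<Sum>p\<in>UNIV. u $ p * u $ p) * (\<Sum>q\<in>UNIV. v $ q * v $ q)"
    by (rule sum_pairs)
  also have "\<dots> = (norm u * norm v)\<^sup>2"
    by (simp add: power2_norm_eq_inner inner_vec_def power_mult_distrib)
  finally show ?thesis by (simp add: power2_eq_iff_nonneg)
qed

lemma entry_bound:
  fixes A :: "real^'r^'n1" and B :: "real^'r^'n2"
  shows "(norm (proj_onto (col_space (khatri_rao A B)) (axis (i,j) 1)))\<^sup>2
     \<le> (norm (proj_onto (col_space A) (axis i 1)))\<^sup>2 * (norm (proj_onto (col_space B) (axis j 1)))\<^sup>2"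
proof -
  let ?u = "proj_onto (col_space A) (axis i 1)"
  let ?v = "proj_onto (col_space B) (axis j 1)"
  let ?w = "(\<chi> p. ?u $ fst p * ?v $ snd p) :: real^('n1\<times>'n2)"
  let ?S = "col_space (khatri_rao A B)"
  let ?e = "axis (i,j) 1 :: real^('n1\<times>'n2)"
  let ?p = "proj_onto ?S ?e"
  have pin: "?p \<in> ?S" using proj_facts(1)[OF subspace_col] .
  have "inner (?e - ?p) ?p = 0" using proj_facts(2)[OF subspace_col pin] .
  then have "(norm ?p)\<^sup>2 = inner ?e ?p" by (simp add: inner_diff_left power2_norm_eq_inner)
  also have "\<dots> = ?p $ (i,j)" by (simp add: inner_commute[of ?e] inner_axis)
  also have "\<dots> = inner ?p ?w" using key[OF pin] .
  also have "\<dots> \<le> norm ?p * norm ?w" by (rule norm_cauchy_schwarz)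
  finally have h: "(norm ?p)\<^sup>2 \<le> norm ?p * (norm ?u * norm ?v)" by (simp add: norm_w)
  have "norm ?p \<le> norm ?u * norm ?v"
  proof (cases "norm ?p = 0")
    case True then show ?thesis by simp
  next
    case False
    then have "norm ?p > 0" by simp
    with h show ?thesis by (simp add: power2_eq_square)
  qed
  then have "(norm ?p)\<^sup>2 \<le> (norm ?u * norm ?v)\<^sup>2" by (simp add: power_mono)
  then show ?thesis by (simp add: power_mult_distrib)
qed

theorem lemma2:
  fixes A :: "real^'r^'n1" and B :: "real^'r^'n2"
  shows "coherence (khatri_rao A B) \<le> coherence A * coherence B * real CARD('r)"
proof -
  define MA where "MA = Max ((\<lambda>i. (norm (proj_onto (col_space A) (axis i 1)))\<^sup>2) ` (UNIV :: 'n1 set))"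
  define MB where "MB = Max ((\<lambda>i. (norm (proj_onto (col_space B) (axis i 1)))\<^sup>2) ` (UNIV :: 'n2 set))"
  define MK where "MK = Max ((\<lambda>i. (norm (proj_onto (col_space (khatri_rao A B)) (axis i 1)))\<^sup>2) ` (UNIV :: ('n1\<times>'n2) set))"
  have a: "(norm (proj_onto (col_space A) (axis i 1)))\<^sup>2 \<le> MA" for i
    unfolding MA_def by (rule Max_ge) auto
  have b: "(norm (proj_onto (col_space B) (axis j 1)))\<^sup>2 \<le> MB" for j
    unfolding MB_def by (rule Max_ge) auto
  have "0 \<le> MA" using a[of undefined] by (meson order_trans zero_le_power2)
  have "MK \<le> MA * MB"
    unfolding MK_def
  proof (rule Max.boundedI)
    show "finite ((\<lambda>i. (norm (proj_onto (col_space (khatri_rao A B)) (axis i 1)))\<^sup>2) ` (UNIV :: ('n1\<times>'n2) set))" by simp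
    show "(\<lambda>i. (norm (proj_onto (col_space (khatri_rao A B)) (axis i 1)))\<^sup>2) ` (UNIV :: ('n1\<times>'n2) set) \<noteq> {}" by simp
  next
    fix x assume "x \<in> (\<lambda>i. (norm (proj_onto (col_space (khatri_rao A B)) (axis i 1)))\<^sup>2) ` (UNIV :: ('n1\<times>'n2) set)"
    then obtain i j where x: "x = (norm (proj_onto (col_space (khatri_rao A B)) (axis (i,j) 1)))\<^sup>2" by auto
    have "x \<le> (norm (proj_onto (col_space A) (axis i 1)))\<^sup>2 * (norm (proj_onto (col_space B) (axis j 1)))\<^sup>2"
      unfolding x by (rule entry_bound)
    also have "\<dots> \<le> MA * MB"
      by (rule mult_mono[OF a b \<open>0 \<le> MA\<close>]) simp
    finally show "x \<le> MA * MB" .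
  qed
  have r: "real CARD('r) > 0" by simp
  have "coherence (khatri_rao A B) = real CARD('n1) * real CARD('n2) / real CARD('r) * MK"
    unfolding coherence_def MK_def by (simp add: card_prod)
  also have "\<dots> \<le> real CARD('n1) * real CARD('n2) / real CARD('r) * (MA * MB)"
    by (rule mult_left_mono[OF \<open>MK \<le> MA * MB\<close>]) simp
  also have "\<dots> = coherence A * coherence B * real CARD('r)"
    unfolding coherence_def MA_def[symmetric] MB_def[symmetric] using r
    by (simp add: field_simps power2_eq_square)
  finally show ?thesis .
qed

end
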